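(* There is an absolute constant $c>0$ such that the following holds. Let $J\ge 1$ and let $\mathbf{b}=(b_1,\dots,b_J)$ be non-negative integers with $b_1+\cdots+b_J=J$. Then \[ \sum_{\mathbf{d}\in\mathcal{D}(\mathbf{b})} \frac{|\mathscr{L}^*(\mathbf{d})|}{d_1\cdots d_J} \ge c\,\frac{(2\log 2)^J}{\sum_{i=1}^J 2^{b_1+\cdots+b_i-i}}. \]
   Context: $\mathcal{D}(\mathbf{b}) = \prod_{i=1}^J \{2^{i-1},2^{i-1}+1,\dots,2^i-1\}^{b_i}$, i.e. the set of $J$-tuples $\mathbf{d}=(d_1,\dots,d_J)$ of positive integers whose first $b_1$ coordinates lie in $[1,1]$, next $b_2$ coordinates lie in $[2,3]$, ..., last $b_J$ coordinates lie in $[2^{J-1},2^J-1]$. For a tuple $\mathbf{a}=(a_1,\dots,a_r)$, $\mathscr{L}^*(\mathbf{a}) = \{\sum_{i\in I} a_i : I\subset\{1,\dots,r\}\}$ is its set of subset sums, and $|\cdot|$ denotes cardinality. Logarithms are natural. *)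

theory Defs
  imports "HOL-Analysis.Analysis"
begin

definition psum :: "(nat \<Rightarrow> nat) \<Rightarrow> nat \<Rightarrow> nat" where
  "psum b i = (\<Sum>j=1..i. b j)"

definition Dset :: "nat \<Rightarrow> (nat \<Rightarrow> nat) \<Rightarrow> (nat \<Rightarrow> nat) set" where
  "Dset J b = {d. (\<forall>k. k \<notin> {1..J} \<longrightarrow> d k = 0) \<and>
      (\<forall>i\<in>{1..J}. \<forall>k. psum b (i - 1) < k \<and> k \<le> psum b i \<longrightarrow>
          d k \<in> {2 ^ (i - 1) .. 2 ^ i - 1})}"

definition subset_sums :: "nat \<Rightarrow> (nat \<Rightarrow> nat) \<Rightarrow> nat set" where
  "subset_sums r a = {\<Sum>i\<in>I. a i | I. I \<subseteq> {1..r}}"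

end

theory Submission
  imports Defs
begin


definition blk :: "(nat \<Rightarrow> nat) \<Rightarrow> nat \<Rightarrow> nat" where
  "blk b m = (LEAST i. m \<le> psum b i)"

lemma psum_mono: "i \<le> j \<Longrightarrow> psum b i \<le> psum b j"
  unfolding psum_def by (rule sum_mono2) auto

lemma psum_0[simp]: "psum b 0 = 0"
  unfolding psum_def by simp

lemma blk_props:
  assumes "(\<Sum>i=1..J. b i) = J" "m \<in> {1..J}"
  shows "blk b m \<in> {1..J}" "psum b (blk b m - 1) < m" "m \<le> psum b (blk b m)"
proof -
  have J: "m \<le> psum b J" using assms by (simp add: psum_def)
  show 3: "m \<le> psum b (blk b m)" unfolding blk_def by (rule LeastI[of _ J]) (rule J)
  have le: "blk b m \<le> J" unfolding blk_def by (rule Least_le) (rule J)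
  have ne0: "blk b m \<noteq> 0"
  proof
    assume "blk b m = 0"
    with 3 have "m \<le> 0" by simp
    with assms(2) show False by simp
  qed
  show "blk b m \<in> {1..J}" using le ne0 by auto
  show "psum b (blk b m - 1) < m"
  proof (rule ccontr)
    assume "\<not> psum b (blk b m - 1) < m"
    then have "m \<le> psum b (blk b m - 1)" by simp
    then have "blk b m \<le> blk b m - 1" unfolding blk_def by (rule Least_le)
    with ne0 show False by simp
  qed
qed

lemma Dset_char:
  assumes "(\<Sum>i=1..J. b i) = J"
  shows "Dset J b = {d. (\<forall>k. k \<notin> {1..J} \<longrightarrow> d k = 0) \<and>
     (\<forall>k\<in>{1..J}. d k \<in> {2^(blk b k - 1)..<2^(blk b k)})}"
proof -
  have PJ: "psum b J = J" using assms by (simp add: psum_def)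
  have eq: "{(2::nat)^(i-1)..2^i - 1} = {2^(i-1)..<2^i}" for i
  proof -
    have e: "Suc (2^i - 1) = (2::nat)^i" by simp
    have "{(2::nat)^(i-1)..2^i - 1} = {2^(i-1)..<Suc (2^i - 1)}" by (rule atLeastLessThanSuc_atLeastAtMost[symmetric])
    then show ?thesis unfolding e .
  qed
  have A: "blk b k = i" if "i \<in> {1..J}" "psum b (i - 1) < k" "k \<le> psum b i" for i k
  proof -
    have k: "k \<in> {1..J}" using that psum_mono[of i J b] PJ by auto
    have "blk b k \<le> i" unfolding blk_def by (rule Least_le) (rule that(3))
    moreover have "\<not> blk b k < i"
    proof
      assume "blk b k < i"
      then have "psum b (blk b k) \<le> psum b (i - 1)" by (intro psum_mono) auto
      with blk_props(3)[OF assms k] that(2) show False by simp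
    qed
    ultimately show ?thesis by simp
  qed
  show ?thesis
    unfolding Dset_def eq
  proof (intro Collect_cong conj_cong refl iffI ballI allI impI)
    fix d :: "nat \<Rightarrow> nat" and k
    assume H: "\<forall>i\<in>{1..J}. \<forall>k. psum b (i - 1) < k \<and> k \<le> psum b i \<longrightarrow> d k \<in> {2 ^ (i - 1)..<2 ^ i}"
      and k: "k \<in> {1..J}"
    show "d k \<in> {2 ^ (blk b k - 1)..<2 ^ blk b k}"
      using H[rule_format, OF blk_props(1)[OF assms k]] blk_props(2,3)[OF assms k] by blast
  next
    fix d :: "nat \<Rightarrow> nat" and i k
    assume H: "\<forall>k\<in>{1..J}. d k \<in> {2 ^ (blk b k - 1)..<2 ^ blk b k}"
      and i: "i \<in> {1..J}" and k: "psum b (i - 1) < k \<and> k \<le> psum b i"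
    have k1: "k \<in> {1..J}" using i k psum_mono[of i J b] PJ by auto
    have "blk b k = i" using k by (intro A[OF i]) auto
    moreover have "d k \<in> {2 ^ (blk b k - 1)..<2 ^ blk b k}" using H k1 by (rule bspec)
    ultimately show "d k \<in> {2 ^ (i - 1)..<2 ^ i}" by simp
  qed
qed

lemma harm: assumes "1 \<le> a" "a \<le> c" shows "ln (real c) - ln (real a) \<le> (\<Sum>x\<in>{a..<c}. 1 / real x)"
  using assms(2)
proof (induction c rule: dec_induct)
  case base then show ?case by simp
next
  case (step n)
  have n: "real n \<ge> 1" using step assms by simp
  have "ln (real (Suc n)) - ln (real n) = ln (real (Suc n) / real n)"
    using n by (simp add: ln_div)
  also have "real (Suc n) / real n = 1 + 1 / real n" using n by (simp add: field_simps)
  also have "ln (1 + 1 / real n) \<le> 1 / real n" by (rule ln_add_one_self_le_self) simp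
  finally show ?case using step by simp
qed

lemma block_harm: "1 \<le> i \<Longrightarrow> ln 2 \<le> (\<Sum>x\<in>{2^(i-1)..<(2::nat)^i}. 1 / real x)"
proof -
  assume i: "1 \<le> i"
  have "ln (real (2^i)) - ln (real ((2::nat)^(i-1))) = ln 2"
    using i by (simp add: ln_realpow of_nat_diff algebra_simps)
  moreover have "ln (real (2^i)) - ln (real ((2::nat)^(i-1))) \<le> (\<Sum>x\<in>{2^(i-1)..<(2::nat)^i}. 1 / real x)"
    by (rule harm) (auto intro: power_increasing)
  ultimately show ?thesis by simp
qed



lemma sum_funs:
  fixes g :: "'a \<Rightarrow> nat \<Rightarrow> real"
  assumes "finite A" "\<And>k. k \<in> A \<Longrightarrow> finite (X k)"
  shows "finite {d. (\<forall>k. k \<notin> A \<longrightarrow> d k = 0) \<and> (\<forall>k\<in>A. d k \<in> X k)}"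
    and "(\<Sum>d\<in>{d. (\<forall>k. k \<notin> A \<longrightarrow> d k = 0) \<and> (\<forall>k\<in>A. d k \<in> X k)}. \<Prod>k\<in>A. g k (d k))
         = (\<Prod>k\<in>A. \<Sum>x\<in>X k. g k x)"
proof -
  let ?E = "{d. (\<forall>k. k \<notin> A \<longrightarrow> d k = 0) \<and> (\<forall>k\<in>A. d k \<in> X k)}"
  let ?i = "\<lambda>e k. if k \<in> A then e k else (0::nat)"
  have img: "?E = ?i ` PiE A X"
  proof (intro set_eqI iffI)
    fix d assume "d \<in> ?E"
    then have "d = ?i (restrict d A)" "restrict d A \<in> PiE A X" by (auto simp: restrict_def)
    then show "d \<in> ?i ` PiE A X" by blast
  qed auto
  show "finite ?E" unfolding img using assms by (intro finite_imageI finite_PiE) auto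
  have "(\<Prod>k\<in>A. \<Sum>x\<in>X k. g k x) = (\<Sum>e\<in>PiE A X. \<Prod>k\<in>A. g k (e k))"
    by (rule prod_sum_PiE) (use assms in auto)
  also have "\<dots> = (\<Sum>d\<in>?E. \<Prod>k\<in>A. g k (d k))"
  proof (rule sum.reindex_bij_witness[where i = "\<lambda>d. restrict d A" and j = ?i])
    fix e assume "e \<in> PiE A X"
    then show "restrict (?i e) A = e" by (auto simp: restrict_def PiE_def extensional_def)
  next
    fix e assume "e \<in> PiE A X"
    then show "?i e \<in> ?E" by auto
  next
    fix d assume "d \<in> ?E"
    then show "?i (restrict d A) = d" by (auto simp: restrict_def)
  next
    fix d assume "d \<in> ?E"
    then show "restrict d A \<in> PiE A X" by auto
  next
    fix e assume "e \<in> PiE A X"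
    show "(\<Prod>k\<in>A. g k (?i e k)) = (\<Prod>k\<in>A. g k (e k))" by (rule prod.cong) auto
  qed
  finally show "(\<Sum>d\<in>?E. \<Prod>k\<in>A. g k (d k)) = (\<Prod>k\<in>A. \<Sum>x\<in>X k. g k x)" by simp
qed

lemma pow_sum_le: "(\<Sum>m\<in>{1..n}. (2::real)^(m-1)) \<le> 2^n"
proof (induction n)
  case 0 then show ?case by simp
next
  case (Suc n)
  have "(\<Sum>m\<in>{1..Suc n}. (2::real)^(m-1)) = (\<Sum>m\<in>{1..n}. (2::real)^(m-1)) + 2^n"
    by simp
  also have "\<dots> \<le> 2^n + 2^n" using Suc by simp
  finally show ?case by simp
qed

lemma weighted_CS:
  fixes w x :: "'a \<Rightarrow> real"
  assumes "\<And>a. a \<in> A \<Longrightarrow> w a \<ge> 0"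
  shows "(\<Sum>a\<in>A. w a * x a)^2 \<le> (\<Sum>a\<in>A. w a) * (\<Sum>a\<in>A. w a * (x a)^2)"
proof -
  have "(\<Sum>a\<in>A. sqrt (w a) * (sqrt (w a) * x a))^2
     \<le> (\<Sum>a\<in>A. (sqrt (w a))^2) * (\<Sum>a\<in>A. (sqrt (w a) * x a)^2)"
    by (rule Cauchy_Schwarz_ineq_sum)
  moreover have "(\<Sum>a\<in>A. sqrt (w a) * (sqrt (w a) * x a)) = (\<Sum>a\<in>A. w a * x a)"
    by (rule sum.cong) (use assms in \<open>auto simp: mult.assoc[symmetric]\<close>)
  moreover have "(\<Sum>a\<in>A. (sqrt (w a))^2) = (\<Sum>a\<in>A. w a)"
    by (rule sum.cong) (use assms in auto)
  moreover have "(\<Sum>a\<in>A. (sqrt (w a) * x a)^2) = (\<Sum>a\<in>A. w a * (x a)^2)"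
    by (rule sum.cong) (use assms in \<open>auto simp: power_mult_distrib\<close>)
  ultimately show ?thesis by simp
qed



locale S4 =
  fixes J :: nat and b :: "nat \<Rightarrow> nat"
  assumes sumJ: "(\<Sum>i=1..J. b i) = J"
begin

definition X :: "nat \<Rightarrow> nat set" where "X k = {(2::nat)^(blk b k - 1)..<2^(blk b k)}"
definition w :: "(nat \<Rightarrow> nat) \<Rightarrow> real" where "w d = 1 / (\<Prod>k=1..J. real (d k))"
abbreviation D where "D \<equiv> Dset J b"
definition T where "T = (\<Sum>d\<in>D. w d)"

lemma D_eq: "D = {d. (\<forall>k. k \<notin> {1..J} \<longrightarrow> d k = 0) \<and> (\<forall>k\<in>{1..J}. d k \<in> X k)}"
  using Dset_char[OF sumJ] by (simp add: X_def)

lemma finite_D: "finite D"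
  unfolding D_eq by (rule sum_funs(1)) (auto simp: X_def)

lemma X_ge: "x \<in> X k \<Longrightarrow> 2^(blk b k - 1) \<le> x" by (simp add: X_def)

lemma X_pos: "x \<in> X k \<Longrightarrow> 0 < x"
  using X_ge[of x k] by (metis le_zero_eq not_gr0 power_not_zero zero_neq_numeral)

lemma X_sum: "k \<in> {1..J} \<Longrightarrow> ln 2 \<le> (\<Sum>x\<in>X k. 1 / real x)"
  unfolding X_def using blk_props(1)[OF sumJ] by (intro block_harm) auto

lemma w_prod: "w d = (\<Prod>k=1..J. 1 / real (d k))"
  unfolding w_def by (simp add: prod_dividef)

lemma T_eq: "T = (\<Prod>k=1..J. \<Sum>x\<in>X k. 1 / real x)"
  unfolding T_def w_prod D_eq by (rule sum_funs(2)) (auto simp: X_def)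

lemma T_ge: "ln 2 ^ J \<le> T"
proof -
  have "ln 2 ^ J = (\<Prod>k=1..J. ln (2::real))" by simp
  also have "\<dots> \<le> (\<Prod>k=1..J. \<Sum>x\<in>X k. 1 / real x)"
    by (rule prod_mono) (use X_sum in auto)
  finally show ?thesis unfolding T_eq .
qed

lemma d_in: "d \<in> D \<Longrightarrow> k \<in> {1..J} \<Longrightarrow> d k \<in> X k"
  unfolding D_eq by auto

lemma d_pos: "d \<in> D \<Longrightarrow> k \<in> {1..J} \<Longrightarrow> 0 < d k"
  using d_in X_pos by blast

lemma w_pos: "d \<in> D \<Longrightarrow> 0 < w d"
  unfolding w_def using d_pos by (auto intro!: prod_pos)

lemma upd_D: "d \<in> D \<Longrightarrow> m \<in> {1..J} \<Longrightarrow> x \<in> X m \<Longrightarrow> d(m := x) \<in> D"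
  unfolding D_eq by auto

lemma w_upd:
  assumes "d \<in> D" "m \<in> {1..J}" "x \<in> X m"
  shows "w (d(m := x)) = w d * real (d m) / real x"
proof -
  let ?R = "\<Prod>k\<in>{1..J} - {m}. real (d k)"
  have R: "?R > 0" using d_pos[OF assms(1)] by (auto intro!: prod_pos)
  have dm: "real (d m) > 0" using d_pos[OF assms(1,2)] by auto
  have x: "real x > 0" using X_pos[OF assms(3)] by simp
  have "(\<Prod>k=1..J. real ((d(m := x)) k)) = real x * (\<Prod>k\<in>{1..J} - {m}. real ((d(m := x)) k))"
    using assms(2) by (subst prod.remove[of _ m]) auto
  also have "(\<Prod>k\<in>{1..J} - {m}. real ((d(m := x)) k)) = ?R" by (rule prod.cong) auto
  finally have 1: "(\<Prod>k=1..J. real ((d(m := x)) k)) = real x * ?R" .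
  have 2: "(\<Prod>k=1..J. real (d k)) = real (d m) * ?R"
    using assms(2) by (subst prod.remove[of _ m]) auto
  show ?thesis unfolding w_def 1 2 using R dm x by (simp add: field_simps)
qed

end


context S4 begin

lemma fiber:
  assumes I: "I \<subseteq> {1..J}" and I': "I' \<subseteq> {1..J}" and mI: "m \<in> I" and mI': "m \<notin> I'"
  shows "(\<Sum>d\<in>{d\<in>D. (\<Sum>k\<in>I. d k) = (\<Sum>k\<in>I'. d k)}. w d) * (2^(blk b m - 1) * ln 2) \<le> T"
proof -
  let ?C = "{d\<in>D. (\<Sum>k\<in>I. d k) = (\<Sum>k\<in>I'. d k)}"
  let ?\<phi> = "\<lambda>(d, x). d(m := x)"
  have m: "m \<in> {1..J}" using I mI by auto
  have finI: "finite I" using I finite_subset by blast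
  have finC: "finite ?C" using finite_D by simp
  have finX: "finite (X m)" by (simp add: X_def)
  have inj: "inj_on ?\<phi> (?C \<times> X m)"
  proof (rule inj_onI, clarify)
    fix d x d' x'
    assume d: "d \<in> D" "(\<Sum>k\<in>I. d k) = (\<Sum>k\<in>I'. d k)" and x: "x \<in> X m"
      and d': "d' \<in> D" "(\<Sum>k\<in>I. d' k) = (\<Sum>k\<in>I'. d' k)" and x': "x' \<in> X m"
      and eq: "d(m := x) = d'(m := x')"
    have xx: "x = x'" using fun_cong[OF eq, of m] by simp
    have off: "d k = d' k" if "k \<noteq> m" for k using fun_cong[OF eq, of k] that by simp
    have s1: "(\<Sum>k\<in>I'. d k) = (\<Sum>k\<in>I'. d' k)" 
    proof (rule sum.cong[OF refl])
      fix k assume "k \<in> I'" then have "k \<noteq> m" using mI' by auto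
      then show "d k = d' k" by (rule off)
    qed
    have s2: "(\<Sum>k\<in>I - {m}. d k) = (\<Sum>k\<in>I - {m}. d' k)" 
    proof (rule sum.cong[OF refl])
      fix k assume "k \<in> I - {m}" then have "k \<noteq> m" by auto
      then show "d k = d' k" by (rule off)
    qed
    have r1: "(\<Sum>k\<in>I. d k) = d m + (\<Sum>k\<in>I - {m}. d k)" using finI mI by (rule sum.remove)
    have r2: "(\<Sum>k\<in>I. d' k) = d' m + (\<Sum>k\<in>I - {m}. d' k)" using finI mI by (rule sum.remove)
    have "d m = d' m" using d(2) d'(2) s1 s2 r1 r2 by linarith
    then have "d = d'" using off by (intro ext) (metis)
    then show "d = d' \<and> x = x'" using xx by simp
  qed
  have sub: "?\<phi> ` (?C \<times> X m) \<subseteq> D" using upd_D m by auto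
  have "(\<Sum>p\<in>?C \<times> X m. w (?\<phi> p)) = (\<Sum>q\<in>?\<phi> ` (?C \<times> X m). w q)"
    by (simp add: sum.reindex[OF inj] comp_def)
  also have "\<dots> \<le> T" unfolding T_def
    by (rule sum_mono2[OF finite_D sub]) (use w_pos in \<open>auto intro: less_imp_le\<close>)
  finally have A: "(\<Sum>p\<in>?C \<times> X m. w (?\<phi> p)) \<le> T" .
  have "(\<Sum>p\<in>?C \<times> X m. w (?\<phi> p)) = (\<Sum>d\<in>?C. \<Sum>x\<in>X m. w (d(m := x)))"
    by (simp add: sum.cartesian_product case_prod_unfold)
  also have "\<dots> = (\<Sum>d\<in>?C. w d * real (d m) * (\<Sum>x\<in>X m. 1 / real x))"
  proof (rule sum.cong[OF refl])
    fix d assume "d \<in> ?C"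
    then have "d \<in> D" by simp
    then show "(\<Sum>x\<in>X m. w (d(m := x))) = w d * real (d m) * (\<Sum>x\<in>X m. 1 / real x)"
      by (simp add: w_upd[OF _ m] sum_distrib_left)
  qed
  finally have B: "(\<Sum>p\<in>?C \<times> X m. w (?\<phi> p)) = (\<Sum>d\<in>?C. w d * real (d m) * (\<Sum>x\<in>X m. 1 / real x))" .
  have "(\<Sum>d\<in>?C. w d) * (2^(blk b m - 1) * ln 2) = (\<Sum>d\<in>?C. w d * (2^(blk b m - 1) * ln 2))"
    by (simp add: sum_distrib_right)
  also have "\<dots> \<le> (\<Sum>d\<in>?C. w d * real (d m) * (\<Sum>x\<in>X m. 1 / real x))"
  proof (rule sum_mono)
    fix d assume "d \<in> ?C"
    then have dD: "d \<in> D" by simp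
    have w0: "0 \<le> w d" using w_pos[OF dD] by simp
    have "2^(blk b m - 1) \<le> d m" using X_ge d_in[OF dD m] by blast
    then have "(2::real)^(blk b m - 1) \<le> real (d m)"
      by (metis of_nat_le_iff of_nat_numeral of_nat_power)
    moreover have "ln 2 \<le> (\<Sum>x\<in>X m. 1 / real x)" using X_sum[OF m] .
    ultimately have "(2::real)^(blk b m - 1) * ln 2 \<le> real (d m) * (\<Sum>x\<in>X m. 1 / real x)"
      by (intro mult_mono) auto
    then show "w d * (2^(blk b m - 1) * ln 2) \<le> w d * real (d m) * (\<Sum>x\<in>X m. 1 / real x)"
      using w0 by (simp add: mult.assoc mult_left_mono)
  qed
  finally show ?thesis using A B by simp
qed

lemma count_pairs:
  assumes m: "m \<in> {1..J}"
  shows "card {p \<in> Pow {1..J} \<times> Pow {1..J}. fst p \<noteq> snd p \<and>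
            Max ((fst p - snd p) \<union> (snd p - fst p)) = m} \<le> 2^J * 2^(m-1)"
proof -
  let ?Q = "{p \<in> Pow {1..J} \<times> Pow {1..J}. fst p \<noteq> snd p \<and>
            Max ((fst p - snd p) \<union> (snd p - fst p)) = m}"
  let ?g = "\<lambda>p. (fst p, snd p \<inter> {1..<m})"
  have key: "k \<in> I' \<longleftrightarrow> k \<in> K'"
    if p: "(I, I') \<in> ?Q" and q: "(I, K') \<in> ?Q" and eqm: "I' \<inter> {1..<m} = K' \<inter> {1..<m}" for I I' K' k
  proof -
    have fin1: "finite ((I - I') \<union> (I' - I))" using p finite_subset by auto
    have ne1: "(I - I') \<union> (I' - I) \<noteq> {}" using p by auto
    have M1: "Max ((I - I') \<union> (I' - I)) = m" using p by simp
    have fin2: "finite ((I - K') \<union> (K' - I))" using q finite_subset by auto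
    have ne2: "(I - K') \<union> (K' - I) \<noteq> {}" using q by auto
    have M2: "Max ((I - K') \<union> (K' - I)) = m" using q by simp
    have in1: "m \<in> (I - I') \<union> (I' - I)" using Max_in[OF fin1 ne1] M1 by simp
    have in2: "m \<in> (I - K') \<union> (K' - I)" using Max_in[OF fin2 ne2] M2 by simp
    have sub1: "I' \<subseteq> {1..J}" "K' \<subseteq> {1..J}" using p q by auto
    consider "k < m" | "k = m" | "k > m" by linarith
    then show ?thesis
    proof cases
      case 1
      show ?thesis
      proof (cases "k \<ge> 1")
        case True
        then have "k \<in> {1..<m}" using 1 by simp
        then show ?thesis using eqm by blast
      next
        case False
        then show ?thesis using sub1 by auto
      qed
    next
      case 2
      then show ?thesis using in1 in2 by blast
    next
      case 3
      have "k \<notin> (I - I') \<union> (I' - I)"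
        using Max_ge[OF fin1, of k] M1 3 by auto
      moreover have "k \<notin> (I - K') \<union> (K' - I)"
        using Max_ge[OF fin2, of k] M2 3 by auto
      ultimately show ?thesis by blast
    qed
  qed
  have inj: "inj_on ?g ?Q"
  proof (rule inj_onI)
    fix p q assume p: "p \<in> ?Q" and q: "q \<in> ?Q" and e: "?g p = ?g q"
    obtain I I' where pp: "p = (I, I')" by (cases p)
    obtain K K' where qq: "q = (K, K')" by (cases q)
    have IK: "I = K" using e pp qq by simp
    have eqm: "I' \<inter> {1..<m} = K' \<inter> {1..<m}" using e pp qq by simp
    have "I' = K'" using key[of I I' K'] p q eqm unfolding pp qq IK by blast
    then show "p = q" using pp qq IK by simp
  qed
  have img: "?g ` ?Q \<subseteq> Pow {1..J} \<times> Pow {1..<m}" by auto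
  have "card ?Q = card (?g ` ?Q)" using card_image[OF inj] by simp
  also have "\<dots> \<le> card (Pow {1..J} \<times> Pow {1..<m})" by (rule card_mono[OF _ img]) simp
  also have "\<dots> = 2^J * 2^(m-1)" by (simp add: card_cartesian_product card_Pow)
  finally show ?thesis .
qed

end


context S4 begin

definition F :: "nat set \<times> nat set \<Rightarrow> real" where
  "F p = (\<Sum>d\<in>{d\<in>D. (\<Sum>k\<in>fst p. d k) = (\<Sum>k\<in>snd p. d k)}. w d)"

definition Mx :: "nat set \<times> nat set \<Rightarrow> nat" where
  "Mx p = Max ((fst p - snd p) \<union> (snd p - fst p))"

definition hh :: "nat \<Rightarrow> real" where "hh m = T / (2^(blk b m - 1) * ln 2)"

lemma T_pos: "T > 0"
proof -
  have "0 < ln (2::real) ^ J" by simp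
  then show ?thesis using T_ge by linarith
qed

lemma F_off:
  assumes p: "p \<in> Pow {1..J} \<times> Pow {1..J}" "fst p \<noteq> snd p"
  shows "F p \<le> hh (Mx p)" "Mx p \<in> {1..J}"
proof -
  obtain I I' where pp: "p = (I, I')" by (cases p)
  have I: "I \<subseteq> {1..J}" "I' \<subseteq> {1..J}" using p pp by auto
  have fin: "finite ((I - I') \<union> (I' - I))" using finite_subset[OF I(1)] finite_subset[OF I(2)] by auto
  have ne: "(I - I') \<union> (I' - I) \<noteq> {}" using p pp by auto
  have Min: "Mx p \<in> (I - I') \<union> (I' - I)" unfolding Mx_def pp using Max_in[OF fin ne] by simp
  then show "Mx p \<in> {1..J}" using I by auto
  have c: "(2::real)^(blk b (Mx p) - 1) * ln 2 > 0" by simp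
  have "F p * (2^(blk b (Mx p) - 1) * ln 2) \<le> T"
  proof (cases "Mx p \<in> I - I'")
    case True
    then show ?thesis using fiber[OF I(1) I(2), of "Mx p"] by (simp add: F_def pp)
  next
    case False
    then have "Mx p \<in> I' - I" using Min by blast
    moreover have "{d\<in>D. (\<Sum>k\<in>I. d k) = (\<Sum>k\<in>I'. d k)} = {d\<in>D. (\<Sum>k\<in>I'. d k) = (\<Sum>k\<in>I. d k)}"
      by auto
    ultimately show ?thesis using fiber[OF I(2) I(1), of "Mx p"] by (simp add: F_def pp)
  qed
  then show "F p \<le> hh (Mx p)" unfolding hh_def using c by (simp add: pos_le_divide_eq)
qed

lemma F_diag: "F (I, I) = T" unfolding F_def T_def by simp

lemma F_nonneg: "F p \<ge> 0" unfolding F_def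
proof (rule sum_nonneg)
  fix d assume "d \<in> {d\<in>D. (\<Sum>k\<in>fst p. d k) = (\<Sum>k\<in>snd p. d k)}"
  then show "0 \<le> w d" using w_pos[of d] by simp
qed

definition S :: real where "S = (\<Sum>i=1..J. 2^(psum b i) / 2^i)"

lemma blocksum: "(\<Sum>m\<in>{1..J}. (2::real)^(m-1) / 2^(blk b m - 1)) \<le> 2 * S"
proof -
  have "(\<Sum>m\<in>{1..J}. (2::real)^(m-1) / 2^(blk b m - 1))
      = (\<Sum>i\<in>blk b ` {1..J}. \<Sum>m\<in>{m\<in>{1..J}. blk b m = i}. (2::real)^(m-1) / 2^(blk b m - 1))"
    by (rule sum.image_gen) simp
  also have "\<dots> \<le> (\<Sum>i\<in>blk b ` {1..J}. 2 * (2^(psum b i) / 2^i))"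
  proof (rule sum_mono)
    fix i assume i: "i \<in> blk b ` {1..J}"
    then have i1: "i \<ge> 1" using blk_props(1)[OF sumJ] by auto
    have "(\<Sum>m\<in>{m\<in>{1..J}. blk b m = i}. (2::real)^(m-1) / 2^(blk b m - 1))
        = (\<Sum>m\<in>{m\<in>{1..J}. blk b m = i}. (2::real)^(m-1)) / 2^(i - 1)"
      by (simp add: sum_divide_distrib)
    also have "(\<Sum>m\<in>{m\<in>{1..J}. blk b m = i}. (2::real)^(m-1)) \<le> (\<Sum>m\<in>{1..psum b i}. (2::real)^(m-1))"
      by (rule sum_mono2) (use blk_props(3)[OF sumJ] in auto)
    also have "\<dots> \<le> 2^(psum b i)" by (rule pow_sum_le)
    also have "(2::real)^(psum b i) / 2^(i-1) = 2 * (2^(psum b i) / 2^i)"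
      using i1 by (cases i) auto
    finally show "(\<Sum>m\<in>{m\<in>{1..J}. blk b m = i}. (2::real)^(m-1) / 2^(blk b m - 1)) \<le> 2 * (2^(psum b i) / 2^i)"
      by (simp add: divide_right_mono)
  qed
  also have "\<dots> \<le> (\<Sum>i\<in>{1..J}. 2 * (2^(psum b i) / 2^i))"
    by (rule sum_mono2) (use blk_props(1)[OF sumJ] in auto)
  also have "\<dots> = 2 * S" unfolding S_def by (simp add: sum_distrib_left)
  finally show ?thesis .
qed

lemma S_ge: "J \<ge> 1 \<Longrightarrow> S \<ge> 1"
proof -
  assume J: "J \<ge> 1"
  have "psum b J = J" using sumJ by (simp add: psum_def)
  then have "(1::real) = 2^(psum b J) / 2^J" by simp
  also have "\<dots> \<le> S" unfolding S_def by (rule member_le_sum) (use J in auto)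
  finally show ?thesis .
qed

end


context S4 begin

lemma V_bound:
  "(\<Sum>p\<in>Pow {1..J} \<times> Pow {1..J}. F p) \<le> 2^J * T + 2^J * T / ln 2 * (2 * S)"
proof -
  let ?P = "Pow {1..J}"
  let ?Q = "?P \<times> ?P"
  let ?Qd = "{p\<in>?Q. fst p = snd p}"
  let ?Qo = "{p\<in>?Q. fst p \<noteq> snd p}"
  have finQ: "finite ?Q" by simp
  have split: "?Q = ?Qd \<union> ?Qo" by auto
  have "(\<Sum>p\<in>?Q. F p) = (\<Sum>p\<in>?Qd. F p) + (\<Sum>p\<in>?Qo. F p)"
    by (subst split, rule sum.union_disjoint) auto
  moreover have "(\<Sum>p\<in>?Qd. F p) = 2^J * T"
  proof -
    have e: "?Qd = (\<lambda>I. (I, I)) ` ?P" by auto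
    have inj: "inj_on (\<lambda>I. (I, I)) ?P" by (auto intro: inj_onI)
    have "(\<Sum>p\<in>?Qd. F p) = (\<Sum>I\<in>?P. F (I, I))" unfolding e by (subst sum.reindex[OF inj]) (simp add: comp_def)
    also have "\<dots> = (\<Sum>I\<in>?P. T)" by (simp add: F_diag)
    also have "\<dots> = 2^J * T" by (simp add: card_Pow)
    finally show ?thesis .
  qed
  moreover have "(\<Sum>p\<in>?Qo. F p) \<le> 2^J * T / ln 2 * (2 * S)"
  proof -
    have "(\<Sum>p\<in>?Qo. F p) \<le> (\<Sum>p\<in>?Qo. hh (Mx p))"
      by (rule sum_mono) (use F_off in auto)
    also have "\<dots> = (\<Sum>m\<in>Mx ` ?Qo. \<Sum>p\<in>{p\<in>?Qo. Mx p = m}. hh (Mx p))"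
      by (rule sum.image_gen) simp
    also have "\<dots> \<le> (\<Sum>m\<in>Mx ` ?Qo. 2^J * 2^(m-1) * hh m)"
    proof (rule sum_mono)
      fix m assume m: "m \<in> Mx ` ?Qo"
      then have m1: "m \<in> {1..J}" using F_off(2) by auto
      define R where "R = {p \<in> Pow {1..J} \<times> Pow {1..J}. fst p \<noteq> snd p \<and>
            Max ((fst p - snd p) \<union> (snd p - fst p)) = m}"
      have eqR: "{p\<in>?Qo. Mx p = m} = R" unfolding R_def by (auto simp: Mx_def)
      have "(\<Sum>p\<in>{p\<in>?Qo. Mx p = m}. hh (Mx p)) = (\<Sum>p\<in>R. hh m)"
        unfolding eqR[symmetric] by (rule sum.cong) auto
      also have "\<dots> = real (card R) * hh m" by simp
      also have "\<dots> \<le> real (2^J * 2^(m-1)) * hh m"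
      proof (rule mult_right_mono)
        show "real (card R) \<le> real (2^J * 2^(m-1))"
          using count_pairs[OF m1] unfolding R_def by (simp only: of_nat_le_iff)
        show "0 \<le> hh m" using T_pos unfolding hh_def by simp
      qed
      finally show "(\<Sum>p\<in>{p\<in>?Qo. Mx p = m}. hh (Mx p)) \<le> 2^J * 2^(m-1) * hh m" by simp
    qed
    also have "\<dots> \<le> (\<Sum>m\<in>{1..J}. 2^J * 2^(m-1) * hh m)"
    proof (rule sum_mono2)
      show "Mx ` ?Qo \<subseteq> {1..J}"
      proof
        fix m assume "m \<in> Mx ` ?Qo"
        then obtain p where "p \<in> ?Qo" "m = Mx p" by blast
        then show "m \<in> {1..J}" using F_off(2)[of p] by simp
      qed
      show "\<And>m. m \<in> {1..J} - Mx ` ?Qo \<Longrightarrow> 0 \<le> 2^J * 2^(m-1) * hh m"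
        using T_pos by (simp add: hh_def)
    qed simp
    also have "\<dots> = 2^J * T / ln 2 * (\<Sum>m\<in>{1..J}. (2::real)^(m-1) / 2^(blk b m - 1))"
      unfolding hh_def sum_distrib_left by (rule sum.cong) (auto simp: field_simps)
    also have "\<dots> \<le> 2^J * T / ln 2 * (2 * S)"
      by (rule mult_left_mono[OF blocksum]) (use T_pos in simp)
    finally show ?thesis .
  qed
  ultimately show ?thesis by linarith
qed

end


context S4 begin

definition nn :: "(nat \<Rightarrow> nat) \<Rightarrow> nat \<Rightarrow> real" where
  "nn d v = real (card {I\<in>Pow {1..J}. (\<Sum>k\<in>I. d k) = v})"

definition E :: "(nat \<Rightarrow> nat) \<Rightarrow> (nat set \<times> nat set) set" where
  "E d = {p\<in>Pow {1..J} \<times> Pow {1..J}. (\<Sum>k\<in>fst p. d k) = (\<Sum>k\<in>snd p. d k)}"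

lemma Lset_eq: "subset_sums J d = (\<lambda>I. \<Sum>k\<in>I. d k) ` Pow {1..J}"
  unfolding subset_sums_def by auto

lemma finL: "finite (subset_sums J d)" unfolding Lset_eq by simp

lemma fact1: "(\<Sum>v\<in>subset_sums J d. nn d v) = 2^J"
proof -
  let ?s = "\<lambda>I. \<Sum>k\<in>I. d k"
  have "real (card (Pow {1..J})) = (\<Sum>I\<in>Pow {1..J}. (1::real))" by simp
  also have "\<dots> = (\<Sum>v\<in>?s ` Pow {1..J}. \<Sum>I\<in>{I\<in>Pow {1..J}. ?s I = v}. (1::real))"
    by (rule sum.image_gen) simp
  also have "\<dots> = (\<Sum>v\<in>subset_sums J d. nn d v)" unfolding Lset_eq nn_def by simp
  finally show ?thesis by (simp add: card_Pow)
qed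

lemma fact2: "(\<Sum>v\<in>subset_sums J d. (nn d v)^2) = real (card (E d))"
proof -
  let ?s = "\<lambda>I. \<Sum>k\<in>I. d k"
  let ?A = "\<lambda>v. {I\<in>Pow {1..J}. ?s I = v}"
  have finE: "finite (E d)" unfolding E_def by simp
  have "real (card (E d)) = (\<Sum>p\<in>E d. (1::real))" by simp
  also have "\<dots> = (\<Sum>v\<in>(\<lambda>p. ?s (fst p)) ` E d. \<Sum>p\<in>{p\<in>E d. ?s (fst p) = v}. (1::real))"
    by (rule sum.image_gen[OF finE])
  also have "(\<lambda>p. ?s (fst p)) ` E d = subset_sums J d"
  proof (intro set_eqI iffI)
    fix v assume "v \<in> (\<lambda>p. ?s (fst p)) ` E d"
    then obtain p where "p \<in> E d" "v = ?s (fst p)" by blast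
    then show "v \<in> subset_sums J d" unfolding Lset_eq E_def by auto
  next
    fix v assume "v \<in> subset_sums J d"
    then obtain I where I: "I \<in> Pow {1..J}" "v = ?s I" unfolding Lset_eq by blast
    then have "(I, I) \<in> E d" unfolding E_def by simp
    then show "v \<in> (\<lambda>p. ?s (fst p)) ` E d" using I(2) by (metis (no_types, lifting) fst_conv rev_image_eqI)
  qed
  also have "(\<Sum>v\<in>subset_sums J d. \<Sum>p\<in>{p\<in>E d. ?s (fst p) = v}. (1::real))
       = (\<Sum>v\<in>subset_sums J d. (nn d v)^2)"
  proof (rule sum.cong[OF refl])
    fix v
    have "{p\<in>E d. ?s (fst p) = v} = ?A v \<times> ?A v" unfolding E_def by auto
    then show "(\<Sum>p\<in>{p\<in>E d. ?s (fst p) = v}. (1::real)) = (nn d v)^2"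
      by (simp add: nn_def card_cartesian_product power2_eq_square)
  qed
  finally show ?thesis by simp
qed

lemma fact3: "(\<Sum>d\<in>D. w d * real (card (E d))) = (\<Sum>p\<in>Pow {1..J} \<times> Pow {1..J}. F p)"
proof -
  let ?Q = "Pow {1..J} \<times> Pow {1..J}"
  let ?c = "\<lambda>d p. (\<Sum>k\<in>fst p. d k) = (\<Sum>k\<in>snd p. d k)"
  have "(\<Sum>d\<in>D. w d * real (card (E d))) = (\<Sum>d\<in>D. \<Sum>p\<in>?Q. if ?c d p then w d else 0)"
  proof (rule sum.cong[OF refl])
    fix d
    have cE: "real (card (E d)) = (\<Sum>p\<in>?Q. if ?c d p then 1 else 0)"
    proof -
      have "real (card (E d)) = (\<Sum>p\<in>E d. (1::real))" by simp
      also have "\<dots> = (\<Sum>p\<in>?Q. if ?c d p then 1 else 0)" unfolding E_def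
        by (rule sum.inter_filter) simp
      finally show ?thesis .
    qed
    have "w d * real (card (E d)) = (\<Sum>p\<in>?Q. w d * (if ?c d p then 1 else 0))"
      by (simp only: cE sum_distrib_left)
    also have "\<dots> = (\<Sum>p\<in>?Q. if ?c d p then w d else 0)"
      by (intro sum.cong refl) simp
    finally show "w d * real (card (E d)) = (\<Sum>p\<in>?Q. if ?c d p then w d else 0)" .
  qed
  also have "\<dots> = (\<Sum>p\<in>?Q. \<Sum>d\<in>D. if ?c d p then w d else 0)" by (rule sum.swap)
  also have "\<dots> = (\<Sum>p\<in>?Q. F p)"
  proof (rule sum.cong[OF refl])
    fix p
    show "(\<Sum>d\<in>D. if ?c d p then w d else 0) = F p"
      unfolding F_def by (rule sum.inter_filter[symmetric]) (rule finite_D)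
  qed
  finally show ?thesis .
qed

lemma CS_main:
  "(2^J * T)^2 \<le> (\<Sum>d\<in>D. real (card (subset_sums J d)) * w d) * (\<Sum>p\<in>Pow {1..J} \<times> Pow {1..J}. F p)"
proof -
  let ?Sig = "SIGMA d:D. subset_sums J d"
  have fin: "\<forall>d\<in>D. finite (subset_sums J d)" using finL by simp
  have CS: "(\<Sum>p\<in>?Sig. w (fst p) * nn (fst p) (snd p))^2
      \<le> (\<Sum>p\<in>?Sig. w (fst p)) * (\<Sum>p\<in>?Sig. w (fst p) * (nn (fst p) (snd p))^2)"
    by (rule weighted_CS) (use w_pos in \<open>auto intro: less_imp_le\<close>)
  have e1: "(\<Sum>p\<in>?Sig. w (fst p) * nn (fst p) (snd p)) = 2^J * T"
  proof -
    have "(\<Sum>p\<in>?Sig. w (fst p) * nn (fst p) (snd p)) = (\<Sum>d\<in>D. \<Sum>v\<in>subset_sums J d. w d * nn d v)"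
      by (simp add: sum.Sigma[OF finite_D fin] split_beta)
    also have "\<dots> = (\<Sum>d\<in>D. w d * 2^J)" by (simp add: sum_distrib_left[symmetric] fact1)
    also have "\<dots> = 2^J * T" unfolding T_def by (metis mult.commute sum_distrib_right)
    finally show ?thesis .
  qed
  have e2: "(\<Sum>p\<in>?Sig. w (fst p)) = (\<Sum>d\<in>D. real (card (subset_sums J d)) * w d)"
  proof -
    have "(\<Sum>p\<in>?Sig. w (fst p)) = (\<Sum>d\<in>D. \<Sum>v\<in>subset_sums J d. w d)"
      by (subst sum.Sigma[OF finite_D fin]) (simp add: split_beta)
    then show ?thesis by simp
  qed
  have e3: "(\<Sum>p\<in>?Sig. w (fst p) * (nn (fst p) (snd p))^2) = (\<Sum>p\<in>Pow {1..J} \<times> Pow {1..J}. F p)"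
  proof -
    have "(\<Sum>p\<in>?Sig. w (fst p) * (nn (fst p) (snd p))^2) = (\<Sum>d\<in>D. \<Sum>v\<in>subset_sums J d. w d * (nn d v)^2)"
      by (simp add: sum.Sigma[OF finite_D fin] split_beta)
    also have "\<dots> = (\<Sum>d\<in>D. w d * real (card (E d)))" by (simp add: sum_distrib_left[symmetric] fact2)
    finally show ?thesis using fact3 by simp
  qed
  show ?thesis using CS unfolding e1 e2 e3 .
qed

end


theorem lemma4p1:
  "\<exists>c::real. c > 0 \<and>
     (\<forall>J::nat. \<forall>b::nat \<Rightarrow> nat. J \<ge> 1 \<longrightarrow> (\<Sum>i=1..J. b i) = J \<longrightarrow>
        (\<Sum>d\<in>Dset J b. real (card (subset_sums J d)) / (\<Prod>k=1..J. real (d k)))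
          \<ge> c * (2 * ln 2) ^ J / (\<Sum>i=1..J. 2 powr (real (psum b i) - real i)))"
proof (intro exI conjI allI impI)
  let ?c = "1 / (1 + 2 / ln (2::real))"
  show "?c > 0"
  proof -
    have "ln (2::real) > 0" by simp
    then have "2 / ln (2::real) > 0" by simp
    then have "1 + 2 / ln (2::real) > 0" by linarith
    then show ?thesis by simp
  qed
  fix J :: nat and b :: "nat \<Rightarrow> nat"
  assume J1: "J \<ge> 1" and sumJ: "(\<Sum>i=1..J. b i) = J"
  interpret S4 J b by unfold_locales (rule sumJ)
  let ?L = "\<Sum>d\<in>Dset J b. real (card (subset_sums J d)) / (\<Prod>k=1..J. real (d k))"
  let ?V = "\<Sum>p\<in>Pow {1..J} \<times> Pow {1..J}. F p"
  let ?N = "(2::real)^J"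
  have L: "?L = (\<Sum>d\<in>D. real (card (subset_sums J d)) * w d)"
    unfolding w_def by simp
  have Seq: "(\<Sum>i=1..J. 2 powr (real (psum b i) - real i)) = S"
    unfolding S_def by (rule sum.cong) (simp_all add: powr_diff powr_realpow)
  have S1: "S \<ge> 1" using S_ge J1 .
  have ln2: "ln (2::real) > 0" by simp
  have NT: "?N * T > 0" using T_pos by simp
  have CS: "(?N * T)^2 \<le> ?L * ?V" using CS_main unfolding L .
  define K where "K = 1 + 2 * S / ln 2"
  have K0: "K > 0" unfolding K_def using S1 ln2 by (simp add: add_pos_nonneg)
  have VK: "?V \<le> ?N * T * K" using V_bound unfolding K_def by (simp add: algebra_simps)
  have L0: "?L \<ge> 0" unfolding L
  proof (rule sum_nonneg)
    fix d assume "d \<in> D"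
    then show "0 \<le> real (card (subset_sums J d)) * w d" using w_pos[of d] by simp
  qed
  have V0: "?V > 0"
  proof (rule ccontr)
    assume "\<not> ?V > 0"
    then have "?L * ?V \<le> 0" using L0 by (simp add: mult_nonneg_nonpos)
    with CS have "(?N * T)^2 \<le> 0" by linarith
    moreover have "(?N * T)^2 > 0" using NT by (intro zero_less_power) 
    ultimately show False by linarith
  qed
  have "?N * T / K = (?N * T)^2 / (?N * T * K)" using NT K0 by (simp add: power2_eq_square)
  also have "\<dots> \<le> (?N * T)^2 / ?V"
    by (rule divide_left_mono[OF VK]) (use V0 NT K0 in auto)
  also have "\<dots> \<le> ?L" using CS V0 by (simp add: pos_divide_le_eq)
  finally have A: "?N * T / K \<le> ?L" .
  have KS: "K \<le> S * (1 + 2 / ln 2)" unfolding K_def using S1 ln2 by (simp add: field_simps)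
  have "?c * (2 * ln 2) ^ J / S = ?N * ln 2 ^ J / (S * (1 + 2 / ln 2))"
    by (simp add: power_mult_distrib)
  also have "\<dots> \<le> ?N * T / (S * (1 + 2 / ln 2))"
    using T_ge S1 ln2 by (intro divide_right_mono mult_left_mono) auto
  also have "\<dots> \<le> ?N * T / K"
    using NT K0 KS by (intro divide_left_mono) auto
  finally have B: "?c * (2 * ln 2) ^ J / S \<le> ?N * T / K" .
  show "?c * (2 * ln 2) ^ J / (\<Sum>i=1..J. 2 powr (real (psum b i) - real i)) \<le> ?L"
    unfolding Seq using A B by linarith
qed

end
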